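(* Let $m\geq 3$ be odd, $n=3m$, and let $\mathcal{L}_n$ be the latin square defined below. Every transversal of $\mathcal{L}_n$ contains at least one entry of the block $A_{11}$.
   Context: A latin square of order $n$ is viewed as its set of entries $(r,c,s)$ (symbol $s$ in row $r$, column $c$); a transversal is a set of $n$ entries containing each row, column and symbol exactly once. Let $m\ge3$ be odd and $n=3m$. The latin square $\mathcal{L}_n$ has rows, columns and symbols in $\{0,1,\dots,n-1\}$ and is partitioned into nine $m\times m$ blocks $A_{ij}$, $i,j\in\{1,2,3\}$: for $a,b\in\{0,\dots,m-1\}$, the cell in row $(i-1)m+a$ and column $(j-1)m+b$ contains $A_{ij}[a,b]$. Writing $t$ for the residue of $a+b$ modulo $m$ in $\{0,\dots,m-1\}$, $A_{ij}[a,b]=t$ if $t\neq 0$ and $i+j\equiv 2\pmod 3$; $A_{ij}[a,b]=t+m$ if $t\neq m-1$ and $i+j\equiv 0\pmod 3$; $A_{ij}[a,b]=t+2m$ if $t\neq m-1$ and $i+j\equiv1\pmod3$; $A_{ij}[a,b]=0$ if $t=0$ and $(i,j)=(1,1)$; $A_{ij}[a,b]=2m-1$ if $t=0$ and $(i,j)=(2,3)$; $A_{ij}[a,b]=3m-1$ if $t=0$ and $(i,j)=(3,2)$; $A_{ij}[a,b]=0$ if $t=m-1$ and $(i,j)\in\{(2,2),(3,3)\}$; $A_{ij}[a,b]=2m-1$ if $t=m-1$ and $(i,j)\in\{(1,2),(3,1)\}$; $A_{ij}[a,b]=3m-1$ if $t=m-1$ and $(i,j)\in\{(1,3),(2,1)\}$.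 An entry of $\mathcal{L}_n$ is said to be in block $A_{ij}$ if its cell lies in that block. *)

theory Defs
  imports Main
begin

text \<open>Entry of block A_ij at local position (a,b), for blocks i,j in {1,2,3}.\<close>
definition blockval :: "nat \<Rightarrow> nat \<Rightarrow> nat \<Rightarrow> nat \<Rightarrow> nat \<Rightarrow> nat" where
  "blockval m i j a b =
    (let t = (a + b) mod m in
     if (i + j) mod 3 = 2 then (if t \<noteq> 0 then t
        else if (i, j) = (1, 1) then 0
        else if (i, j) = (2, 3) then 2*m - 1
        else 3*m - 1)
     else if (i + j) mod 3 = 0 then (if t \<noteq> m - 1 then t + m
        else if (i, j) = (1, 2) \<or> (i, j) = (3, 1) then 2*m - 1
        else if (i, j) = (2, 1) \<or> (i, j) = (1, 3) then 3*m - 1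
        else 0)
     else (if t \<noteq> m - 1 then t + 2*m
        else if (i, j) = (2, 2) \<or> (i, j) = (3, 3) then 0
        else if (i, j) = (1, 2) \<or> (i, j) = (3, 1) then 2*m - 1
        else 3*m - 1))"

definition Lsym :: "nat \<Rightarrow> nat \<Rightarrow> nat \<Rightarrow> nat" where
  "Lsym m r c = blockval m (r div m + 1) (c div m + 1) (r mod m) (c mod m)"

definition Lsq :: "nat \<Rightarrow> (nat \<times> nat \<times> nat) set" where
  "Lsq m = {(r, c, Lsym m r c) | r c. r < 3*m \<and> c < 3*m}"

definition is_transversal :: "nat \<Rightarrow> (nat \<times> nat \<times> nat) set \<Rightarrow> (nat \<times> nat \<times> nat) set \<Rightarrow> bool" where
  "is_transversal n L T \<longleftrightarrow> T \<subseteq> L \<and> finite T \<and> card T = n \<and>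
     (\<forall>x<n. \<exists>!e\<in>T. fst e = x) \<and>
     (\<forall>x<n. \<exists>!e\<in>T. fst (snd e) = x) \<and>
     (\<forall>x<n. \<exists>!e\<in>T. snd (snd e) = x)"

definition in_block :: "nat \<Rightarrow> nat \<Rightarrow> nat \<Rightarrow> nat \<times> nat \<times> nat \<Rightarrow> bool" where
  "in_block m i j e \<longleftrightarrow> fst e div m + 1 = i \<and> fst (snd e) div m + 1 = j"

end

theory Submission imports Defs begin
lemma e1: "(m::nat) \<ge> 1 \<Longrightarrow> (2*m-1) mod m = m - 1"
proof -
  assume m: "m \<ge> 1" then have "2*m-1 = (m-1) + m" by simp
  then have "(2*m-1) mod m = ((m-1) + m) mod m" by simp
  also have "... = (m-1) mod m" by (rule mod_add_self2)
  finally show ?thesis using m by simp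
qed
lemma e2: "(m::nat) \<ge> 1 \<Longrightarrow> (3*m-1) mod m = m - 1"
proof -
  assume m: "m \<ge> 1" then have "3*m-1 = (m-1) + 2*m" by simp
  then have "(3*m-1) mod m = ((m-1) + 2*m) mod m" by simp
  also have "... = (m-1) mod m" by (rule mod_mult_self1)
  finally show ?thesis using m by simp
qed
lemma e3: "(m::nat) \<ge> 1 \<Longrightarrow> t < m \<Longrightarrow> (t + m) mod m = t" by simp
lemma e4: "(m::nat) \<ge> 1 \<Longrightarrow> t < m \<Longrightarrow> (t + 2*m) mod m = t" by simp

lemma bv:
  assumes m: "m \<ge> 3" and i: "i \<in> {1,2,3::nat}" and j: "j \<in> {1,2,3::nat}"
  shows bv1: "blockval m i j a b = 0 \<Longrightarrow> i = j"
    and bv2: "1 \<le> blockval m i j a b \<Longrightarrow> blockval m i j a b < m \<Longrightarrow>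
           (i,j) \<in> {(1,1),(2,3),(3,2)} \<and> blockval m i j a b = (a+b) mod m"
    and bv3: "(i,j) \<notin> {(1,1),(2,3),(3,2)} \<Longrightarrow> blockval m i j a b \<noteq> 0 \<Longrightarrow>
           blockval m i j a b mod m = (a+b) mod m"
    and bv4: "(i,j) \<in> {(2,2),(3,3)} \<Longrightarrow> blockval m i j a b = 0 \<Longrightarrow> (a+b) mod m = m - 1"
proof -
  define t where "t = (a+b) mod m"
  have t: "t < m" using m t_def by simp
  have m1: "m \<ge> 1" using m by simp
  have E1: "(2*m - Suc 0) mod m = m - Suc 0" using e1[OF m1] by simp
  have E2: "(3*m - Suc 0) mod m = m - Suc 0" using e2[OF m1] by simp
  note E = E1 E2 e3[OF m1 t] e4[OF m1 t]
  have bd: "blockval m i j a b = (if (i + j) mod 3 = 2 then (if t \<noteq> 0 then t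
        else if (i, j) = (1, 1) then 0
        else if (i, j) = (2, 3) then 2*m - 1
        else 3*m - 1)
     else if (i + j) mod 3 = 0 then (if t \<noteq> m - 1 then t + m
        else if (i, j) = (1, 2) \<or> (i, j) = (3, 1) then 2*m - 1
        else if (i, j) = (2, 1) \<or> (i, j) = (1, 3) then 3*m - 1
        else 0)
     else (if t \<noteq> m - 1 then t + 2*m
        else if (i, j) = (2, 2) \<or> (i, j) = (3, 3) then 0
        else if (i, j) = (1, 2) \<or> (i, j) = (3, 1) then 2*m - 1
        else 3*m - 1))" unfolding blockval_def Let_def t_def by simp
  show "blockval m i j a b = 0 \<Longrightarrow> i = j" using i j m t unfolding bd by (elim insertE emptyE) (simp_all add: bd split: if_splits)
  show "1 \<le> blockval m i j a b \<Longrightarrow> blockval m i j a b < m \<Longrightarrow>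
           (i,j) \<in> {(1,1),(2,3),(3,2)} \<and> blockval m i j a b = (a+b) mod m"
    using i j m t unfolding bd by (elim insertE emptyE) (simp_all add: bd t_def[symmetric] split: if_splits)
  show "(i,j) \<notin> {(1,1),(2,3),(3,2)} \<Longrightarrow> blockval m i j a b \<noteq> 0 \<Longrightarrow>
           blockval m i j a b mod m = (a+b) mod m"
    using i j m t unfolding bd by (elim insertE emptyE) (simp_all add: bd E t_def[symmetric] split: if_splits)
  show "(i,j) \<in> {(2,2),(3,3)} \<Longrightarrow> blockval m i j a b = 0 \<Longrightarrow> (a+b) mod m = m - 1"
    using i j m t unfolding bd by (elim insertE emptyE) (simp_all add: bd t_def[symmetric] split: if_splits)
qed

lemma proj_bij:
  assumes "finite T" "card T = n" "\<forall>x<n. \<exists>e\<in>T. g e = x"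
  shows "bij_betw g T {..<n}"
proof -
  have sub: "{..<n} \<subseteq> g ` T" using assms(3) by force
  have "card (g ` T) \<le> n" using card_image_le[OF assms(1)] assms(2) by simp
  then have eq: "{..<n} = g ` T" using card_seteq[OF finite_imageI[OF assms(1)] sub] by simp
  then have "card (g ` T) = card T" using assms(2) by (metis card_lessThan)
  then have "inj_on g T" using eq_card_imp_inj_on assms(1) by blast
  then show ?thesis using eq by (simp add: bij_betw_def)
qed

lemma proj_card:
  assumes "bij_betw g T {..<n}" "A \<subseteq> {..<n}"
  shows "card {e\<in>T. g e \<in> A} = card A"
proof -
  have inj: "inj_on g {e\<in>T. g e \<in> A}" using assms(1) unfolding bij_betw_def
    by (rule inj_on_subset[OF conjunct1]) auto
  have "g ` {e\<in>T. g e \<in> A} = A" using assms unfolding bij_betw_def by auto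
  then show ?thesis using card_image[OF inj] by simp
qed

lemma proj_sum:
  assumes "bij_betw g T {..<n}"
  shows "sum g T = sum id {..<n}"
  using sum.reindex_bij_betw[OF assms, of id] by simp

lemma gauss2: "2 * sum id {..<k} = k * (k - 1::nat)"
proof (induction k)
  case 0 then show ?case by simp
next
  case (Suc k) then show ?case by (cases k) (auto simp: algebra_simps)
qed

lemma S_dvd:
  assumes "odd (m::nat)" shows "m dvd sum id {..<3*m}"
proof -
  obtain q where q: "m = 2*q+1" using assms oddE by blast
  have "2 * sum id {..<3*m} = 3*m*(3*m-1)" by (rule gauss2)
  also have "... = 2 * (m * (3*(3*q+1)))" unfolding q by (simp add: algebra_simps)
  finally have "sum id {..<3*m} = m * (3*(3*q+1))" by simp
  then show ?thesis by simp
qed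

theorem lemma14:
  fixes m :: nat and T :: "(nat \<times> nat \<times> nat) set"
  assumes "odd m" and "m \<ge> 3"
    and "is_transversal (3*m) (Lsq m) T"
  shows "\<exists>e\<in>T. in_block m 1 1 e"
proof (rule ccontr)
  assume "\<not> (\<exists>e\<in>T. in_block m 1 1 e)"
  then have no11: "\<And>e. e \<in> T \<Longrightarrow> \<not> (fst e < m \<and> fst (snd e) < m)"
    unfolding in_block_def using assms(2) by (auto simp: div_eq_0_iff)
  define n where "n = 3*m"
  have m3: "m \<ge> 3" by fact
  have sub: "T \<subseteq> Lsq m" and fin: "finite T" and cT: "card T = n"
    and Rx: "\<forall>x<n. \<exists>e\<in>T. fst e = x" and Cx: "\<forall>x<n. \<exists>e\<in>T. fst (snd e) = x"
    and Sx: "\<forall>x<n. \<exists>e\<in>T. snd (snd e) = x"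
    using assms(3) unfolding is_transversal_def n_def by auto
  have bR: "bij_betw fst T {..<n}" by (rule proj_bij[OF fin cT Rx])
  have bC: "bij_betw (\<lambda>e. fst (snd e)) T {..<n}" by (rule proj_bij[OF fin cT Cx])
  have bS: "bij_betw (\<lambda>e. snd (snd e)) T {..<n}" by (rule proj_bij[OF fin cT Sx])
  define bi where "bi e = fst e div m + 1" for e :: "nat \<times> nat \<times> nat"
  define bj where "bj e = fst (snd e) div m + 1" for e :: "nat \<times> nat \<times> nat"
  have memb: "fst e < n \<and> fst (snd e) < n \<and>
      snd (snd e) = blockval m (bi e) (bj e) (fst e mod m) (fst (snd e) mod m)
      \<and> bi e \<in> {1,2,3} \<and> bj e \<in> {1,2,3}" if eT: "e \<in> T" for e
  proof -
    obtain r c where e: "e = (r, c, Lsym m r c)" "r < 3*m" "c < 3*m"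
      using sub eT unfolding Lsq_def by auto
    have "r div m < 3" "c div m < 3" using e by (auto simp: div_less_iff_less_mult)
    then show ?thesis using e unfolding bi_def bj_def Lsym_def n_def by auto
  qed
  have bi1: "bi e = 1 \<longleftrightarrow> fst e < m" for e unfolding bi_def using m3 by (auto simp: div_eq_0_iff)
  have bj1: "bj e = 1 \<longleftrightarrow> fst (snd e) < m" for e unfolding bj_def using m3 by (auto simp: div_eq_0_iff)
  have modsum: "(fst e mod m + fst (snd e) mod m) mod m = (fst e + fst (snd e)) mod m" for e
    by (simp add: mod_add_eq)
  have "\<exists>e\<in>T. snd (snd e) = 0" using Sx m3 unfolding n_def by auto
  then obtain e0 where e0: "e0 \<in> T" "snd (snd e0) = 0" by blast
  have z: "blockval m (bi e0) (bj e0) (fst e0 mod m) (fst (snd e0) mod m) = 0"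
    using memb[OF e0(1)] e0 by simp
  have e0b1: "bi e0 = bj e0" using bv1[OF m3 _ _ z] memb[OF e0(1)] by blast
  have e0b: "bi e0 = bj e0" "bi e0 \<noteq> 1" using e0b1 no11[OF e0(1)] bi1[of e0] bj1[of e0] by auto
  define P where "P = {e\<in>T. fst (snd e) \<in> {..<m}}"
  define Q where "Q = {e\<in>T. fst e \<in> {..<m}}"
  define B where "B = {e\<in>T. (bi e, bj e) \<in> {(2,3),(3,2)}}"
  define R1 where "R1 = {e\<in>T. snd (snd e) \<in> {1..<m}}"
  have cP: "card P = m" unfolding P_def using proj_card[OF bC, of "{..<m}"] n_def by auto
  have cQ: "card Q = m" unfolding Q_def using proj_card[OF bR, of "{..<m}"] n_def by auto
  have cR1: "card R1 = m - 1" unfolding R1_def using proj_card[OF bS, of "{1..<m}"] n_def by (simp add: subset_eq)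
  have finB: "finite B" unfolding B_def using fin by simp
  have d1: "P \<inter> Q = {}" unfolding P_def Q_def using no11 by auto
  have d2: "(P \<union> Q) \<inter> B = {}" unfolding P_def Q_def B_def by (auto simp: bi1[symmetric] bj1[symmetric])
  have d3: "e0 \<notin> P \<union> Q \<union> B" unfolding P_def Q_def B_def using e0b bi1[of e0] bj1[of e0] memb[OF e0(1)] by auto
  have "card (P \<union> Q \<union> B \<union> {e0}) = m + m + card B + 1"
    using d1 d2 d3 cP cQ finB fin unfolding P_def Q_def
    by (simp add: card_Un_disjoint)
  moreover have "card (P \<union> Q \<union> B \<union> {e0}) \<le> card T"
    by (rule card_mono[OF fin]) (use e0 in \<open>auto simp: P_def Q_def B_def\<close>)
  ultimately have cB: "card B \<le> m - 1" using cT n_def by simp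
  have R1B: "R1 \<subseteq> B"
  proof
    fix e assume e: "e \<in> R1"
    then have eT: "e \<in> T" unfolding R1_def by simp
    have "(bi e, bj e) \<in> {(1,1),(2,3),(3,2)}"
      using bv2[OF m3, of "bi e" "bj e"] memb[OF eT] e unfolding R1_def by auto
    then show "e \<in> B" using no11[OF eT] bi1[of e] bj1[of e] eT unfolding B_def by auto
  qed
  have BR1: "B = R1"
    using card_subset_eq[OF finB R1B] cB cR1 card_mono[OF finB R1B] by simp
  define f where "f e = (if e = e0 then 1 else 0::nat)" for e :: "nat \<times> nat \<times> nat"
  have key: "(fst e + fst (snd e) + f e) mod m = snd (snd e) mod m" if eT: "e \<in> T" for e
  proof (cases "e = e0")
    case True
    have "(bi e0, bj e0) \<in> {(2,2),(3,3)}" using e0b memb[OF e0(1)] by auto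
    then have "(fst e0 mod m + fst (snd e0) mod m) mod m = m - 1"
      using bv4[OF m3 _ _ _ z] memb[OF e0(1)] by blast
    then have "(fst e0 + fst (snd e0)) mod m = m - 1" using modsum[of e0] by simp
    then have "(fst e0 + fst (snd e0) + 1) mod m = (m - 1 + 1) mod m" by (metis mod_add_left_eq)
    then show ?thesis using True e0 m3 f_def by simp
  next
    case False
    then have f0: "f e = 0" unfolding f_def by simp
    show ?thesis
    proof (cases "e \<in> B")
      case True
      then have "snd (snd e) \<in> {1..<m}" using BR1 unfolding R1_def by auto
      then have s1: "1 \<le> blockval m (bi e) (bj e) (fst e mod m) (fst (snd e) mod m)"
          "blockval m (bi e) (bj e) (fst e mod m) (fst (snd e) mod m) < m"
        using memb[OF eT] by auto
      have M: "bi e \<in> {1,2,3}" "bj e \<in> {1,2,3}" using memb[OF eT] by auto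
      have "blockval m (bi e) (bj e) (fst e mod m) (fst (snd e) mod m) = (fst e mod m + fst (snd e) mod m) mod m"
        using bv2[OF m3 M s1] by blast
      then have "snd (snd e) = (fst e + fst (snd e)) mod m"
        using memb[OF eT] modsum[of e] by simp
      then show ?thesis using f0 by simp
    next
      case nB: False
      have "snd (snd e) \<noteq> 0"
      proof
        assume "snd (snd e) = 0"
        then have "e = e0" using bS e0 eT unfolding bij_betw_def inj_on_def by auto
        then show False using False by simp
      qed
      moreover have "(bi e, bj e) \<notin> {(1,1),(2,3),(3,2)}"
        using nB no11[OF eT] bi1[of e] bj1[of e] eT unfolding B_def by auto
      moreover have M: "bi e \<in> {1,2,3}" "bj e \<in> {1,2,3}" using memb[OF eT] by auto
      ultimately have "blockval m (bi e) (bj e) (fst e mod m) (fst (snd e) mod m) mod m = (fst e mod m + fst (snd e) mod m) mod m"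
        using bv3[OF m3 M] memb[OF eT] by simp
      then have "snd (snd e) mod m = (fst e + fst (snd e)) mod m"
        using memb[OF eT] modsum[of e] by simp
      then show ?thesis using f0 by simp
    qed
  qed
  define S where "S = sum id {..<n}"
  have sf: "sum f T = 1" unfolding f_def using e0 fin by simp
  have "(\<Sum>e\<in>T. fst e + fst (snd e) + f e) mod m = (\<Sum>e\<in>T. snd (snd e)) mod m"
  proof -
    have "(\<Sum>e\<in>T. fst e + fst (snd e) + f e) mod m = (\<Sum>e\<in>T. (fst e + fst (snd e) + f e) mod m) mod m"
      by (simp add: mod_sum_eq)
    also have "... = (\<Sum>e\<in>T. snd (snd e) mod m) mod m" using key by (simp cong: sum.cong)
    also have "... = (\<Sum>e\<in>T. snd (snd e)) mod m" by (simp add: mod_sum_eq)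
    finally show ?thesis .
  qed
  moreover have "(\<Sum>e\<in>T. fst e + fst (snd e) + f e) = S + S + 1"
    using proj_sum[OF bR] proj_sum[OF bC] sf unfolding S_def by (simp add: sum.distrib)
  moreover have "(\<Sum>e\<in>T. snd (snd e)) = S" using proj_sum[OF bS] unfolding S_def .
  moreover have "m dvd S" using S_dvd[OF assms(1)] unfolding S_def n_def .
  ultimately have "(S + S + 1) mod m = 0" by simp
  moreover have "(S + S + 1) mod m = 1"
  proof -
    obtain k where k: "S = m * k" using \<open>m dvd S\<close> by blast
    have "S + S + 1 = 1 + m * (2*k)" unfolding k by simp
    then have "(S + S + 1) mod m = (1 + m * (2*k)) mod m" by simp
    also have "... = 1 mod m" by (rule mod_mult_self2)
    finally show ?thesis using m3 by simp
  qed
  ultimately show False by simp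
qed
end
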